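(* Let $\mathcal{A}$ be an Ershov $\mathcal{C}$-algebra. If $\mathcal{A}$ is weakly equationally Noetherian, then every subset of $\mathcal{C}$ that is bounded above in $\mathcal{A}$ has a supremum in $\mathcal{A}$, and this supremum belongs to $\mathcal{C}$.
   Context: An Ershov algebra is a structure $\langle A; \vee, \wedge, \setminus, 0\rangle$ such that $\langle A;\vee,\wedge\rangle$ is a distributive lattice with least element $0$, and $b \setminus a$ is the relative complement: the unique $z$ with $z \wedge a = 0$ and $z \vee a = a \vee b$. An Ershov $\mathcal{C}$-algebra is an Ershov algebra $\mathcal{A}$ together with a distinguished subalgebra $\mathcal{C}$ whose elements are added as constant symbols; $\mathcal{L}$ is the language $\{\vee,\wedge,\setminus,0\}$ plus these constants. An equation is $t(\bar x)=s(\bar x)$ with $t,s$ terms of $\mathcal{L}$. Two systems of equations are equivalent over $\mathcal{A}$ if they have the same solution set. $\mathcal{A}$ is weakly equationally Noetherian if every system of equations (possibly infinite) in finitely many variables is equivalent over $\mathcal{A}$ to some finite system of equations of $\mathcal{L}$. *)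

theory Defs
  imports Main
begin

text \<open>Ershov algebras, given on a carrier set A with operations
  jn (join), mt (meet), df (relative complement b \ a written df b a) and zero z.\<close>

definition ershov_algebra ::
  "'a set \<Rightarrow> ('a \<Rightarrow> 'a \<Rightarrow> 'a) \<Rightarrow> ('a \<Rightarrow> 'a \<Rightarrow> 'a) \<Rightarrow> ('a \<Rightarrow> 'a \<Rightarrow> 'a) \<Rightarrow> 'a \<Rightarrow> bool" where
  "ershov_algebra A jn mt df z \<longleftrightarrow>
     z \<in> A \<and>
     (\<forall>x\<in>A. \<forall>y\<in>A. jn x y \<in> A \<and> mt x y \<in> A \<and> df x y \<in> A) \<and>
     (\<forall>x\<in>A. \<forall>y\<in>A. \<forall>w\<in>A. jn (jn x y) w = jn x (jn y w) \<and> mt (mt x y) w = mt x (mt y w)) \<and>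
     (\<forall>x\<in>A. \<forall>y\<in>A. jn x y = jn y x \<and> mt x y = mt y x) \<and>
     (\<forall>x\<in>A. \<forall>y\<in>A. jn x (mt x y) = x \<and> mt x (jn x y) = x) \<and>
     (\<forall>x\<in>A. \<forall>y\<in>A. \<forall>w\<in>A. mt x (jn y w) = jn (mt x y) (mt x w)) \<and>
     (\<forall>x\<in>A. jn z x = x) \<and>
     (\<forall>a\<in>A. \<forall>b\<in>A. mt (df b a) a = z \<and> jn (df b a) a = jn a b)"

definition ershov_subalgebra ::
  "'a set \<Rightarrow> 'a set \<Rightarrow> ('a \<Rightarrow> 'a \<Rightarrow> 'a) \<Rightarrow> ('a \<Rightarrow> 'a \<Rightarrow> 'a) \<Rightarrow> ('a \<Rightarrow> 'a \<Rightarrow> 'a) \<Rightarrow> 'a \<Rightarrow> bool" where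
  "ershov_subalgebra C A jn mt df z \<longleftrightarrow>
     C \<subseteq> A \<and> z \<in> C \<and> (\<forall>x\<in>C. \<forall>y\<in>C. jn x y \<in> C \<and> mt x y \<in> C \<and> df x y \<in> C)"

datatype 'a trm = Var nat | Cst 'a | Zero | Join "'a trm" "'a trm"
  | Meet "'a trm" "'a trm" | Diff "'a trm" "'a trm"

fun vars_trm :: "'a trm \<Rightarrow> nat set" where
  "vars_trm (Var i) = {i}"
| "vars_trm (Cst c) = {}"
| "vars_trm Zero = {}"
| "vars_trm (Join s t) = vars_trm s \<union> vars_trm t"
| "vars_trm (Meet s t) = vars_trm s \<union> vars_trm t"
| "vars_trm (Diff s t) = vars_trm s \<union> vars_trm t"

fun consts_trm :: "'a trm \<Rightarrow> 'a set" where
  "consts_trm (Var i) = {}"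
| "consts_trm (Cst c) = {c}"
| "consts_trm Zero = {}"
| "consts_trm (Join s t) = consts_trm s \<union> consts_trm t"
| "consts_trm (Meet s t) = consts_trm s \<union> consts_trm t"
| "consts_trm (Diff s t) = consts_trm s \<union> consts_trm t"

fun eval_trm ::
  "('a \<Rightarrow> 'a \<Rightarrow> 'a) \<Rightarrow> ('a \<Rightarrow> 'a \<Rightarrow> 'a) \<Rightarrow> ('a \<Rightarrow> 'a \<Rightarrow> 'a) \<Rightarrow> 'a \<Rightarrow> 'a list \<Rightarrow> 'a trm \<Rightarrow> 'a" where
  "eval_trm jn mt df z xs (Var i) = xs ! i"
| "eval_trm jn mt df z xs (Cst c) = c"
| "eval_trm jn mt df z xs Zero = z"
| "eval_trm jn mt df z xs (Join s t) = jn (eval_trm jn mt df z xs s) (eval_trm jn mt df z xs t)"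
| "eval_trm jn mt df z xs (Meet s t) = mt (eval_trm jn mt df z xs s) (eval_trm jn mt df z xs t)"
| "eval_trm jn mt df z xs (Diff s t) = df (eval_trm jn mt df z xs s) (eval_trm jn mt df z xs t)"

definition is_eqn :: "'a set \<Rightarrow> nat \<Rightarrow> 'a trm \<times> 'a trm \<Rightarrow> bool" where
  "is_eqn C n e \<longleftrightarrow>
     vars_trm (fst e) \<union> vars_trm (snd e) \<subseteq> {..<n} \<and>
     consts_trm (fst e) \<union> consts_trm (snd e) \<subseteq> C"

definition solset ::
  "'a set \<Rightarrow> ('a \<Rightarrow> 'a \<Rightarrow> 'a) \<Rightarrow> ('a \<Rightarrow> 'a \<Rightarrow> 'a) \<Rightarrow> ('a \<Rightarrow> 'a \<Rightarrow> 'a) \<Rightarrow> 'a \<Rightarrow> nat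
     \<Rightarrow> ('a trm \<times> 'a trm) set \<Rightarrow> 'a list set" where
  "solset A jn mt df z n S =
     {xs. length xs = n \<and> set xs \<subseteq> A \<and>
          (\<forall>e\<in>S. eval_trm jn mt df z xs (fst e) = eval_trm jn mt df z xs (snd e))}"

definition weakly_eq_noetherian ::
  "'a set \<Rightarrow> 'a set \<Rightarrow> ('a \<Rightarrow> 'a \<Rightarrow> 'a) \<Rightarrow> ('a \<Rightarrow> 'a \<Rightarrow> 'a) \<Rightarrow> ('a \<Rightarrow> 'a \<Rightarrow> 'a) \<Rightarrow> 'a \<Rightarrow> bool" where
  "weakly_eq_noetherian A C jn mt df z \<longleftrightarrow>
     (\<forall>n S. (\<forall>e\<in>S. is_eqn C n e) \<longrightarrow>
        (\<exists>S0. finite S0 \<and> (\<forall>e\<in>S0. is_eqn C n e) \<and>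
              solset A jn mt df z n S = solset A jn mt df z n S0))"

definition ershov_le :: "('a \<Rightarrow> 'a \<Rightarrow> 'a) \<Rightarrow> 'a \<Rightarrow> 'a \<Rightarrow> bool" where
  "ershov_le jn x y \<longleftrightarrow> jn x y = y"

definition is_upper_bound :: "'a set \<Rightarrow> ('a \<Rightarrow> 'a \<Rightarrow> 'a) \<Rightarrow> 'a set \<Rightarrow> 'a \<Rightarrow> bool" where
  "is_upper_bound A jn X u \<longleftrightarrow> u \<in> A \<and> (\<forall>x\<in>X. ershov_le jn x u)"

definition is_supremum :: "'a set \<Rightarrow> ('a \<Rightarrow> 'a \<Rightarrow> 'a) \<Rightarrow> 'a set \<Rightarrow> 'a \<Rightarrow> bool" where
  "is_supremum A jn X s \<longleftrightarrow> is_upper_bound A jn X s \<and>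
     (\<forall>u. is_upper_bound A jn X u \<longrightarrow> ershov_le jn s u)"

end

theory Submission imports Defs begin

locale ersh =
  fixes A :: "'a set" and jn mt df :: "'a \<Rightarrow> 'a \<Rightarrow> 'a" and z :: 'a
  assumes ea: "ershov_algebra A jn mt df z"
begin

lemma zA: "z \<in> A" using ea unfolding ershov_algebra_def by blast
lemma cj: "x \<in> A \<Longrightarrow> y \<in> A \<Longrightarrow> jn x y \<in> A" using ea unfolding ershov_algebra_def by blast
lemma cm: "x \<in> A \<Longrightarrow> y \<in> A \<Longrightarrow> mt x y \<in> A" using ea unfolding ershov_algebra_def by blast
lemma cd: "x \<in> A \<Longrightarrow> y \<in> A \<Longrightarrow> df x y \<in> A" using ea unfolding ershov_algebra_def by blast
lemma ja: "x \<in> A \<Longrightarrow> y \<in> A \<Longrightarrow> w \<in> A \<Longrightarrow> jn (jn x y) w = jn x (jn y w)" using ea unfolding ershov_algebra_def by blast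
lemma ma: "x \<in> A \<Longrightarrow> y \<in> A \<Longrightarrow> w \<in> A \<Longrightarrow> mt (mt x y) w = mt x (mt y w)" using ea unfolding ershov_algebra_def by blast
lemma jc: "x \<in> A \<Longrightarrow> y \<in> A \<Longrightarrow> jn x y = jn y x" using ea unfolding ershov_algebra_def by blast
lemma mc: "x \<in> A \<Longrightarrow> y \<in> A \<Longrightarrow> mt x y = mt y x" using ea unfolding ershov_algebra_def by blast
lemma ab1: "x \<in> A \<Longrightarrow> y \<in> A \<Longrightarrow> jn x (mt x y) = x" using ea unfolding ershov_algebra_def by blast
lemma ab2: "x \<in> A \<Longrightarrow> y \<in> A \<Longrightarrow> mt x (jn x y) = x" using ea unfolding ershov_algebra_def by blast
lemma dist: "x \<in> A \<Longrightarrow> y \<in> A \<Longrightarrow> w \<in> A \<Longrightarrow> mt x (jn y w) = jn (mt x y) (mt x w)" using ea unfolding ershov_algebra_def by blast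
lemma jz: "x \<in> A \<Longrightarrow> jn z x = x" using ea unfolding ershov_algebra_def by blast
lemma df1: "a \<in> A \<Longrightarrow> b \<in> A \<Longrightarrow> mt (df b a) a = z" using ea unfolding ershov_algebra_def by blast
lemma df2: "a \<in> A \<Longrightarrow> b \<in> A \<Longrightarrow> jn (df b a) a = jn a b" using ea unfolding ershov_algebra_def by blast

lemma jidem: "x \<in> A \<Longrightarrow> jn x x = x" by (metis ab1 ab2 cj)
lemma midem: "x \<in> A \<Longrightarrow> mt x x = x" by (metis ab1 ab2 cm)
lemma jz2: "x \<in> A \<Longrightarrow> jn x z = x" by (metis jz jc zA)
lemma mz: "x \<in> A \<Longrightarrow> mt z x = z" by (metis ab2 jz zA)
lemma mz2: "x \<in> A \<Longrightarrow> mt x z = z" by (metis mz mc zA)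
lemma dist2: "x \<in> A \<Longrightarrow> y \<in> A \<Longrightarrow> w \<in> A \<Longrightarrow> mt (jn y w) x = jn (mt y x) (mt w x)"
  by (metis dist mc cj)
lemma le_mt: "x \<in> A \<Longrightarrow> y \<in> A \<Longrightarrow> jn x y = y \<longleftrightarrow> mt x y = x"
  by (metis ab1 ab2 jc mc)
lemma dualdist: "x \<in> A \<Longrightarrow> y \<in> A \<Longrightarrow> w \<in> A \<Longrightarrow> jn x (mt y w) = mt (jn x y) (jn x w)"
proof -
  assume h: "x \<in> A" "y \<in> A" "w \<in> A"
  have "mt (jn x y) (jn x w) = jn (mt (jn x y) x) (mt (jn x y) w)" using h by (simp add: dist cj)
  also have "mt (jn x y) x = x" using h by (metis ab2 mc cj)
  also have "mt (jn x y) w = jn (mt x w) (mt y w)" using h by (simp add: dist2)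
  also have "jn x (jn (mt x w) (mt y w)) = jn (jn x (mt x w)) (mt y w)" using h by (simp add: ja cm)
  also have "jn x (mt x w) = x" using h by (simp add: ab1)
  finally show ?thesis by simp
qed
lemma le_trans: "x \<in> A \<Longrightarrow> y \<in> A \<Longrightarrow> w \<in> A \<Longrightarrow> jn x y = y \<Longrightarrow> jn y w = w \<Longrightarrow> jn x w = w"
  by (metis ja)

lemma uniq: "a \<in> A \<Longrightarrow> b \<in> A \<Longrightarrow> c \<in> A \<Longrightarrow> mt c a = z \<Longrightarrow> jn c a = jn a b \<Longrightarrow> c = df b a"
proof -
  assume h: "a \<in> A" "b \<in> A" "c \<in> A" "mt c a = z" "jn c a = jn a b"
  have below: "mt c b = c" if "c \<in> A" "mt c a = z" "jn c a = jn a b" for c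
  proof -
    have "c = mt c (jn c a)" using that h by (metis ab2)
    also have "\<dots> = mt c (jn a b)" using that by metis
    also have "\<dots> = jn (mt c a) (mt c b)" using that h by (simp add: dist)
    finally show ?thesis using that h by (simp add: jz cm)
  qed
  have lt: "mt c w = c" if "c \<in> A" "w \<in> A" "mt c a = z" "jn c a = jn a b" "mt w a = z" "jn w a = jn a b" for c w
  proof -
    have "c = mt c b" using below that by simp
    have "jn b (jn w a) = jn w a" using that h
      by (metis ab2 cj jc le_mt) 
    hence "mt c b = mt (mt c b) (jn w a)" using that h by (metis cm ma le_mt cj)
    also have "\<dots> = mt c (jn w a)" using \<open>c = mt c b\<close> by simp
    also have "\<dots> = jn (mt c w) (mt c a)" using that h dist by metis
    finally have "mt c b = jn (mt c w) (mt c a)" .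
    thus ?thesis using that h \<open>c = mt c b\<close> by (metis jz2 cm)
  qed
  have w: "df b a \<in> A" "mt (df b a) a = z" "jn (df b a) a = jn a b" using h by (auto simp: cd df1 df2)
  have "mt c (df b a) = c" using lt[OF h(3) w(1) h(4,5) w(2,3)] .
  moreover have "mt (df b a) c = df b a" using lt[OF w(1) h(3) w(2,3) h(4,5)] .
  ultimately show ?thesis using h w mc by metis
qed


lemma dle: "x \<in> A \<Longrightarrow> y \<in> A \<Longrightarrow> mt (df x y) x = df x y"
proof -
  assume h: "x \<in> A" "y \<in> A"
  let ?w = "df x y"
  have wA: "?w \<in> A" using h cd by blast
  have "?w = mt ?w (jn ?w y)" using wA h ab2 by metis
  also have "jn ?w y = jn y x" using h df2 by blast
  also have "mt ?w (jn y x) = jn (mt ?w y) (mt ?w x)" using wA h dist by blast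
  also have "mt ?w y = z" using h df1 by blast
  finally show ?thesis using jz wA h cm by metis
qed

lemma mzero: "w \<in> A \<Longrightarrow> u \<in> A \<Longrightarrow> v \<in> A \<Longrightarrow> mt w u = w \<Longrightarrow> mt u v = z \<Longrightarrow> mt w v = z"
  by (metis ma mz2)

lemma D3: "a \<in> A \<Longrightarrow> b \<in> A \<Longrightarrow> d \<in> A \<Longrightarrow> mt (df a b) d = df (mt a d) (mt b d)"
proof -
  assume h: "a \<in> A" "b \<in> A" "d \<in> A"
  have c: "df a b \<in> A" "mt a d \<in> A" "mt b d \<in> A" "mt (df a b) d \<in> A" using h by (auto intro: cd cm)
  show ?thesis
  proof (rule uniq)
    show "mt (mt (df a b) d) (mt b d) = z"
      by (metis c h ma mc midem df1 mz)
    have "jn (mt (df a b) d) (mt b d) = mt (jn (df a b) b) d" using c h dist2 by metis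
    also have "\<dots> = mt (jn b a) d" using h df2 by metis
    also have "\<dots> = jn (mt b d) (mt a d)" using h dist2 by metis
    finally show "jn (mt (df a b) d) (mt b d) = jn (mt b d) (mt a d)" .
  qed (use c in auto)
qed

lemma D4: "a \<in> A \<Longrightarrow> b \<in> A \<Longrightarrow> x \<in> A \<Longrightarrow> df (jn a b) x = jn (df a x) (df b x)"
proof -
  assume h: "a \<in> A" "b \<in> A" "x \<in> A"
  have c: "df a x \<in> A" "df b x \<in> A" "jn a b \<in> A" using h by (auto intro: cd cj)
  show ?thesis
  proof (rule sym, rule uniq)
    show "mt (jn (df a x) (df b x)) x = z" using c h dist2 df1 jz zA by metis
    have "jn (jn (df a x) (df b x)) x = jn (df a x) (jn (df b x) x)" using c h ja by metis
    also have "\<dots> = jn (df a x) (jn (df b x) (jn x x))" using h jidem by metis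
    also have "\<dots> = jn (df a x) (jn x (jn (df b x) x))" using c h ja jc by (metis cj)
    also have "\<dots> = jn (jn (df a x) x) (jn (df b x) x)" using c h ja cj by metis
    also have "\<dots> = jn (jn x a) (jn x b)" using h df2 by metis
    also have "\<dots> = jn x (jn a (jn x b))" using h ja cj by metis
    also have "\<dots> = jn x (jn x (jn a b))" using h ja jc cj by metis
    also have "\<dots> = jn x (jn a b)" using h ja jidem cj by metis
    finally show "jn (jn (df a x) (df b x)) x = jn x (jn a b)" .
  qed (use c h in \<open>auto intro: cj\<close>)
qed


lemma D5: "a \<in> A \<Longrightarrow> b \<in> A \<Longrightarrow> x \<in> A \<Longrightarrow> df (mt a b) x = mt (df a x) (df b x)"
proof -
  assume h: "a \<in> A" "b \<in> A" "x \<in> A"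
  have c: "df a x \<in> A" "df b x \<in> A" "mt a b \<in> A" using h by (auto intro: cd cm)
  show ?thesis
  proof (rule sym, rule uniq)
    show "mt (mt (df a x) (df b x)) x = z" using c h ma df1 mz2 by metis
    have "jn (mt (df a x) (df b x)) x = jn x (mt (df a x) (df b x))" using c h jc cm by metis
    also have "\<dots> = mt (jn x (df a x)) (jn x (df b x))" using c h dualdist by metis
    also have "jn x (df a x) = jn x a" using c h df2 jc by metis
    also have "jn x (df b x) = jn x b" using c h df2 jc by metis
    also have "mt (jn x a) (jn x b) = jn x (mt a b)" using h dualdist by metis
    finally show "jn (mt (df a x) (df b x)) x = jn x (mt a b)" .
  qed (use c h in \<open>auto intro: cm\<close>)
qed

lemma D6a: "a \<in> A \<Longrightarrow> b \<in> A \<Longrightarrow> c \<in> A \<Longrightarrow> df (df a b) c = df a (jn b c)"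
proof -
  assume h: "a \<in> A" "b \<in> A" "c \<in> A"
  let ?w = "df (df a b) c"
  have cc: "df a b \<in> A" "?w \<in> A" "jn b c \<in> A" using h by (auto intro: cd cj)
  show ?thesis
  proof (rule uniq)
    have "mt ?w b = z"
      using mzero[OF cc(2) cc(1) h(2)] dle[OF cc(1) h(3)] df1[OF h(2,1)] by blast
    moreover have "mt ?w c = z" using df1 cc h by metis
    ultimately show "mt ?w (jn b c) = z" using dist cc h jz zA by metis
    have "jn ?w (jn b c) = jn (jn ?w c) b" using cc h ja jc by metis
    also have "jn ?w c = jn c (df a b)" using cc h df2 by metis
    also have "jn (jn c (df a b)) b = jn c (jn (df a b) b)" using cc h ja by metis
    also have "jn (df a b) b = jn b a" using h df2 by metis
    also have "jn c (jn b a) = jn (jn b c) a" using h ja jc by metis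
    finally show "jn ?w (jn b c) = jn (jn b c) a" .
  qed (use cc h in auto)
qed

lemma D6: "a \<in> A \<Longrightarrow> b \<in> A \<Longrightarrow> x \<in> A \<Longrightarrow> df (df a b) x = df (df a x) (df b x)"
proof -
  assume h: "a \<in> A" "b \<in> A" "x \<in> A"
  have "df (df a x) (df b x) = df a (jn x (df b x))" using D6a h cd by metis
  also have "jn x (df b x) = jn b x" using h df2 jc cd by metis
  finally show ?thesis using D6a h by metis
qed

lemma D7: "x \<in> A \<Longrightarrow> df x x = z" by (metis uniq mz jz jidem zA)
lemma D7b: "x \<in> A \<Longrightarrow> df z x = z" by (metis uniq mz jz jz2 zA)

lemma D8: "y \<in> A \<Longrightarrow> x \<in> A \<Longrightarrow> jn (mt y x) (df y x) = y"
proof -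
  assume h: "y \<in> A" "x \<in> A"
  have "mt y (jn x (df y x)) = jn (mt y x) (mt y (df y x))" using h dist cd by metis
  moreover have "mt y (df y x) = df y x" using h dle mc cd by metis
  moreover have "jn x (df y x) = jn x y" using h df2 jc cd by metis
  moreover have "mt y (jn x y) = y" using h ab2 jc by metis
  ultimately show ?thesis by metis
qed

lemma D9: "v \<in> A \<Longrightarrow> e \<in> A \<Longrightarrow> jn v e = e \<Longrightarrow> df v e = z"
  by (metis uniq mz jz jc zA)

lemma D10: "y \<in> A \<Longrightarrow> x \<in> A \<Longrightarrow> df y x = z \<Longrightarrow> jn y x = x"
  by (metis D8 jz2 cm le_mt)


lemma ev_cl: "x \<in> A \<Longrightarrow> vars_trm t \<subseteq> {..<1} \<Longrightarrow> consts_trm t \<subseteq> A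
   \<Longrightarrow> eval_trm jn mt df z [x] t \<in> A"
  by (induction t) (auto intro: cj cm cd zA)

lemma evh: "x \<in> A \<Longrightarrow> d \<in> A \<Longrightarrow> vars_trm t \<subseteq> {..<1} \<Longrightarrow> consts_trm t \<subseteq> A
   \<Longrightarrow> (\<forall>c\<in>consts_trm t. mt c d = c)
   \<Longrightarrow> eval_trm jn mt df z [mt x d] t = mt (eval_trm jn mt df z [x] t) d"
proof (induction t)
  case (Var i) thus ?case by simp
next
  case (Cst c) thus ?case by simp
next
  case Zero thus ?case by (simp add: mz)
next
  case (Join t1 t2)
  let ?p = "eval_trm jn mt df z [x] t1" and ?q = "eval_trm jn mt df z [x] t2"
  have e: "?p \<in> A" "?q \<in> A" using Join.prems by (auto intro: ev_cl)
  have "eval_trm jn mt df z [mt x d] t1 = mt ?p d" "eval_trm jn mt df z [mt x d] t2 = mt ?q d"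
    using Join by auto
  thus ?case using dist2[OF Join.prems(2) e] by simp
next
  case (Meet t1 t2)
  let ?p = "eval_trm jn mt df z [x] t1" and ?q = "eval_trm jn mt df z [x] t2"
  have e: "?p \<in> A" "?q \<in> A" using Meet.prems by (auto intro: ev_cl)
  have "eval_trm jn mt df z [mt x d] t1 = mt ?p d" "eval_trm jn mt df z [mt x d] t2 = mt ?q d"
    using Meet by auto
  moreover have "mt (mt ?p d) (mt ?q d) = mt (mt ?p ?q) d"
    using Meet.prems(2) e by (metis ma mc midem cm)
  ultimately show ?case by simp
next
  case (Diff t1 t2)
  let ?p = "eval_trm jn mt df z [x] t1" and ?q = "eval_trm jn mt df z [x] t2"
  have e: "?p \<in> A" "?q \<in> A" using Diff.prems by (auto intro: ev_cl)
  have "eval_trm jn mt df z [mt x d] t1 = mt ?p d" "eval_trm jn mt df z [mt x d] t2 = mt ?q d"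
    using Diff by auto
  thus ?case using D3[OF e Diff.prems(2)] by simp
qed


lemma eva: "x \<in> A \<Longrightarrow> d \<in> A \<Longrightarrow> mt x d = x \<Longrightarrow> vars_trm t \<subseteq> {..<1} \<Longrightarrow> consts_trm t \<subseteq> A
   \<Longrightarrow> mt (eval_trm jn mt df z [x] t) x = mt (eval_trm jn mt df z [d] t) x"
proof (induction t)
  case (Var i) thus ?case by (simp add: midem) (metis mc)
next
  case (Cst c) thus ?case by simp
next
  case Zero thus ?case by simp
next
  case (Join t1 t2)
  let ?p = "eval_trm jn mt df z [x] t1" and ?q = "eval_trm jn mt df z [x] t2"
  let ?p' = "eval_trm jn mt df z [d] t1" and ?q' = "eval_trm jn mt df z [d] t2"
  have e: "?p \<in> A" "?q \<in> A" "?p' \<in> A" "?q' \<in> A" using Join.prems by (auto intro: ev_cl)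
  have "mt ?p x = mt ?p' x" "mt ?q x = mt ?q' x" using Join by auto
  thus ?case using dist2[OF Join.prems(1) e(1,2)] dist2[OF Join.prems(1) e(3,4)] by simp
next
  case (Meet t1 t2)
  let ?p = "eval_trm jn mt df z [x] t1" and ?q = "eval_trm jn mt df z [x] t2"
  let ?p' = "eval_trm jn mt df z [d] t1" and ?q' = "eval_trm jn mt df z [d] t2"
  have e: "?p \<in> A" "?q \<in> A" "?p' \<in> A" "?q' \<in> A" using Meet.prems by (auto intro: ev_cl)
  have "mt ?p x = mt ?p' x" "mt ?q x = mt ?q' x" using Meet by auto
  moreover have "\<And>p q. p \<in> A \<Longrightarrow> q \<in> A \<Longrightarrow> mt (mt p x) (mt q x) = mt (mt p q) x"
    using Meet.prems(1) by (metis ma mc midem cm)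
  ultimately show ?case using e by (metis eval_trm.simps(5))
next
  case (Diff t1 t2)
  let ?p = "eval_trm jn mt df z [x] t1" and ?q = "eval_trm jn mt df z [x] t2"
  let ?p' = "eval_trm jn mt df z [d] t1" and ?q' = "eval_trm jn mt df z [d] t2"
  have e: "?p \<in> A" "?q \<in> A" "?p' \<in> A" "?q' \<in> A" using Diff.prems by (auto intro: ev_cl)
  have "mt ?p x = mt ?p' x" "mt ?q x = mt ?q' x" using Diff by auto
  thus ?case using D3[OF e(1,2) Diff.prems(1)] D3[OF e(3,4) Diff.prems(1)] by simp
qed

lemma evb: "x \<in> A \<Longrightarrow> vars_trm t \<subseteq> {..<1} \<Longrightarrow> consts_trm t \<subseteq> A
   \<Longrightarrow> df (eval_trm jn mt df z [x] t) x = df (eval_trm jn mt df z [z] t) x"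
proof (induction t)
  case (Var i) thus ?case by (simp add: D7 D7b)
next
  case (Cst c) thus ?case by simp
next
  case Zero thus ?case by simp
next
  case (Join t1 t2)
  let ?p = "eval_trm jn mt df z [x] t1" and ?q = "eval_trm jn mt df z [x] t2"
  let ?p' = "eval_trm jn mt df z [z] t1" and ?q' = "eval_trm jn mt df z [z] t2"
  have e: "?p \<in> A" "?q \<in> A" "?p' \<in> A" "?q' \<in> A" using Join.prems by (auto intro: ev_cl zA)
  have "df ?p x = df ?p' x" "df ?q x = df ?q' x" using Join by auto
  thus ?case using D4[OF e(1,2) Join.prems(1)] D4[OF e(3,4) Join.prems(1)] by simp
next
  case (Meet t1 t2)
  let ?p = "eval_trm jn mt df z [x] t1" and ?q = "eval_trm jn mt df z [x] t2"
  let ?p' = "eval_trm jn mt df z [z] t1" and ?q' = "eval_trm jn mt df z [z] t2"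
  have e: "?p \<in> A" "?q \<in> A" "?p' \<in> A" "?q' \<in> A" using Meet.prems by (auto intro: ev_cl zA)
  have "df ?p x = df ?p' x" "df ?q x = df ?q' x" using Meet by auto
  thus ?case using D5[OF e(1,2) Meet.prems(1)] D5[OF e(3,4) Meet.prems(1)] by simp
next
  case (Diff t1 t2)
  let ?p = "eval_trm jn mt df z [x] t1" and ?q = "eval_trm jn mt df z [x] t2"
  let ?p' = "eval_trm jn mt df z [z] t1" and ?q' = "eval_trm jn mt df z [z] t2"
  have e: "?p \<in> A" "?q \<in> A" "?p' \<in> A" "?q' \<in> A" using Diff.prems by (auto intro: ev_cl zA)
  have "df ?p x = df ?p' x" "df ?q x = df ?q' x" using Diff by auto
  thus ?case using D6[OF e(1,2) Diff.prems(1)] D6[OF e(3,4) Diff.prems(1)] by simp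
qed


lemma Dsym: "a \<in> A \<Longrightarrow> b \<in> A \<Longrightarrow> e \<in> A \<Longrightarrow> jn (df a b) e = e \<Longrightarrow> jn (df b a) e = e \<Longrightarrow> df a e = df b e"
proof -
  have one: "df a e = df (mt a b) e" if h: "a \<in> A" "b \<in> A" "e \<in> A" "jn (df a b) e = e" for a b
  proof -
    have c: "mt a b \<in> A" "df a b \<in> A" using h by (auto intro: cm cd)
    have "df a e = df (jn (mt a b) (df a b)) e" using D8 h by metis
    also have "\<dots> = jn (df (mt a b) e) (df (df a b) e)" using D4 c h by metis
    also have "df (df a b) e = z" using D9 c h by metis
    finally show ?thesis using jz2 c h cd by metis
  qed
  assume h: "a \<in> A" "b \<in> A" "e \<in> A" "jn (df a b) e = e" "jn (df b a) e = e"
  show ?thesis using one[of a b] one[of b a] h mc by metis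
qed

lemma join_ex: "finite F \<Longrightarrow> F \<subseteq> C \<Longrightarrow> C \<subseteq> A \<Longrightarrow> z \<in> C \<Longrightarrow> (\<forall>x\<in>C. \<forall>y\<in>C. jn x y \<in> C)
  \<Longrightarrow> \<exists>E\<in>C. (\<forall>c\<in>F. jn c E = E) \<and> (\<forall>v\<in>A. (\<forall>c\<in>F. jn c v = v) \<longrightarrow> jn E v = v)"
proof (induction F rule: finite_induct)
  case empty thus ?case using jz by (metis empty_iff)
next
  case (insert c F)
  then obtain E where E: "E \<in> C" "\<forall>c\<in>F. jn c E = E" "\<forall>v\<in>A. (\<forall>c\<in>F. jn c v = v) \<longrightarrow> jn E v = v" by auto
  have cA: "c \<in> A" "E \<in> A" using insert E by auto
  show ?case
  proof (rule bexI[of _ "jn c E"], intro conjI ballI impI)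
    fix c' assume "c' \<in> insert c F"
    thus "jn c' (jn c E) = jn c E"
    proof
      assume "c' = c" thus ?thesis using cA ja jidem by metis
    next
      assume "c' \<in> F"
      hence "c' \<in> A" "jn c' E = E" using insert E by auto
      thus ?thesis using cA ja jc by metis
    qed
  next
    fix v assume "v \<in> A" "\<forall>c'\<in>insert c F. jn c' v = v"
    thus "jn (jn c E) v = v" using cA E ja by (metis insertCI)
  qed (use insert E in auto)
qed

end

lemma ev_clB: "z \<in> B \<Longrightarrow> (\<forall>x\<in>B. \<forall>y\<in>B. jn x y \<in> B \<and> mt x y \<in> B \<and> df x y \<in> B) \<Longrightarrow>
   x \<in> B \<Longrightarrow> vars_trm t \<subseteq> {..<1} \<Longrightarrow> consts_trm t \<subseteq> B
   \<Longrightarrow> eval_trm jn mt df z [x] t \<in> B"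
  by (induction t) auto

lemma finite_consts: "finite (consts_trm t)" by (induction t) auto


context ersh begin

lemma main:
  assumes sub: "ershov_subalgebra C A jn mt df z" and wn: "weakly_eq_noetherian A C jn mt df z"
    and XC: "X \<subseteq> C" and u: "is_upper_bound A jn X u"
  shows "\<exists>s\<in>C. is_supremum A jn X s"
proof -
  have CA: "C \<subseteq> A" and zC: "z \<in> C" and Ccl: "\<forall>x\<in>C. \<forall>y\<in>C. jn x y \<in> C \<and> mt x y \<in> C \<and> df x y \<in> C"
    using sub unfolding ershov_subalgebra_def by auto
  define S where "S = (\<lambda>c. (Join (Cst c) (Var 0), Var 0 :: 'a trm)) ` X"
  have Seq: "\<forall>e\<in>S. is_eqn C 1 e" using XC unfolding S_def is_eqn_def by auto
  have imp: "(\<forall>e\<in>S. is_eqn C 1 e) \<longrightarrow> (\<exists>S0. finite S0 \<and> (\<forall>e\<in>S0. is_eqn C 1 e) \<and>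
              solset A jn mt df z 1 S = solset A jn mt df z 1 S0)"
    using wn unfolding weakly_eq_noetherian_def by (rule spec[of _ S, OF spec[of _ 1]])
  obtain S0 where fin: "finite S0" and eq0: "\<forall>e\<in>S0. is_eqn C 1 e"
    and ss: "solset A jn mt df z 1 S = solset A jn mt df z 1 S0"
    using mp[OF imp Seq] by blast
  define ev where "ev x t = eval_trm jn mt df z [x] t" for x t
  define Q where "Q x \<longleftrightarrow> (\<forall>e\<in>S0. ev x (fst e) = ev x (snd e))" for x
  have ub_iff: "is_upper_bound A jn X x \<longleftrightarrow> Q x" if xA: "x \<in> A" for x
  proof -
    have "[x] \<in> solset A jn mt df z 1 S \<longleftrightarrow> is_upper_bound A jn X x"
      using xA unfolding solset_def S_def is_upper_bound_def ershov_le_def by auto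
    moreover have "[x] \<in> solset A jn mt df z 1 S0 \<longleftrightarrow> Q x"
      using xA unfolding solset_def Q_def ev_def by auto
    ultimately show ?thesis using ss by simp
  qed
  have vt: "vars_trm (fst e) \<subseteq> {..<1}" "vars_trm (snd e) \<subseteq> {..<1}"
     "consts_trm (fst e) \<subseteq> C" "consts_trm (snd e) \<subseteq> C" if "e \<in> S0" for e
    using eq0 that unfolding is_eqn_def by auto
  define K where "K = (\<Union>e\<in>S0. consts_trm (fst e) \<union> consts_trm (snd e))"
  have "finite K" using fin finite_consts unfolding K_def by auto
  moreover have "K \<subseteq> C" using vt(3,4) unfolding K_def by blast
  ultimately
  obtain d where dC: "d \<in> C" and dK: "\<forall>c\<in>K. jn c d = d"
    using join_ex[of K C] CA zC Ccl by blast
  have dA: "d \<in> A" using dC CA by auto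
  have cle: "\<forall>c\<in>consts_trm (fst e). mt c d = c" "\<forall>c\<in>consts_trm (snd e). mt c d = c" if "e \<in> S0" for e
    using dK that vt[OF that] CA dA le_mt unfolding K_def by blast+
  have vtA: "consts_trm (fst e) \<subseteq> A" "consts_trm (snd e) \<subseteq> A" if "e \<in> S0" for e
    using vt[OF that] CA by auto
  have Qh: "Q (mt v d)" if "v \<in> A" "Q v" for v
    unfolding Q_def ev_def
  proof
    fix e assume e: "e \<in> S0"
    show "eval_trm jn mt df z [mt v d] (fst e) = eval_trm jn mt df z [mt v d] (snd e)"
      using evh[OF that(1) dA vt(1)[OF e] vtA(1)[OF e] cle(1)[OF e]]
        evh[OF that(1) dA vt(2)[OF e] vtA(2)[OF e] cle(2)[OF e]] that(2) e
      unfolding Q_def ev_def by simp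
  qed
  have evzC: "ev z (fst e) \<in> C" "ev z (snd e) \<in> C" if "e \<in> S0" for e
    unfolding ev_def using ev_clB[OF zC Ccl zC] vt[OF that] by auto
  define F where "F = (\<Union>e\<in>S0. {df (ev z (fst e)) (ev z (snd e)), df (ev z (snd e)) (ev z (fst e))})"
  have "finite F" "F \<subseteq> C" using fin evzC Ccl unfolding F_def by auto
  then obtain E where EC: "E \<in> C" and EF: "\<forall>c\<in>F. jn c E = E"
    and Emin: "\<forall>v\<in>A. (\<forall>c\<in>F. jn c v = v) \<longrightarrow> jn E v = v"
    using join_ex[of F C] CA zC Ccl by blast
  have EA: "E \<in> A" using EC CA by auto
  have Fle: "\<forall>c\<in>F. jn c x = x" if xA: "x \<in> A" and Qx: "Q x" for x
  proof -
    have key: "jn (df (ev z (fst e)) (ev z (snd e))) x = x \<and> jn (df (ev z (snd e)) (ev z (fst e))) x = x"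
      if e: "e \<in> S0" for e
    proof -
      let ?a = "ev z (fst e)" and ?b = "ev z (snd e)"
      have ab: "?a \<in> A" "?b \<in> A" using evzC[OF e] CA by auto
      have "df (ev x (fst e)) x = df ?a x" "df (ev x (snd e)) x = df ?b x"
        unfolding ev_def using evb[OF xA vt(1)[OF e] vtA(1)[OF e]] evb[OF xA vt(2)[OF e] vtA(2)[OF e]] by auto
      moreover have "ev x (fst e) = ev x (snd e)" using Qx e unfolding Q_def by auto
      ultimately have eq: "df ?a x = df ?b x" by simp
      have c: "df ?a x \<in> A" "df ?b x \<in> A" using cd ab xA by auto
      have "df (df ?a ?b) x = z" using D6[OF ab xA] eq D7[OF c(2)] by simp
      moreover have "df (df ?b ?a) x = z" using D6[OF ab(2,1) xA] eq D7[OF c(2)] by simp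
      ultimately show ?thesis using D10[OF cd[OF ab] xA] D10[OF cd[OF ab(2,1)] xA] by simp
    qed
    show ?thesis unfolding F_def using key by auto
  qed
  have uA: "u \<in> A" using u unfolding is_upper_bound_def by auto
  have Qu: "Q u" using ub_iff[OF uA] u by simp
  define w where "w = mt u d"
  have wA: "w \<in> A" unfolding w_def using uA dA cm by auto
  have Qw: "Q w" unfolding w_def using Qh uA Qu by auto
  have wd: "mt w d = w" unfolding w_def using uA dA ma midem by metis
  have Ew: "jn E w = w" using Emin Fle[OF wA Qw] wA by auto
  have Ed: "mt E d = E"
  proof -
    have "jn w d = d" using wd le_mt wA dA by metis
    hence "jn E d = d" using le_trans[OF EA wA dA Ew] by simp
    thus ?thesis using le_mt EA dA by metis
  qed
  have mwE: "mt w E = E" using Ew le_mt mc EA wA by metis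
  have QE: "Q E" unfolding Q_def
  proof
    fix e assume e: "e \<in> S0"
    let ?t1 = "fst e" and ?t2 = "snd e"
    have evA: "ev E ?t1 \<in> A" "ev E ?t2 \<in> A" "ev d ?t1 \<in> A" "ev d ?t2 \<in> A"
      unfolding ev_def using ev_cl vt[OF e] vtA[OF e] EA dA by auto
    have m1: "mt (ev E ?t1) E = mt (ev d ?t1) E" "mt (ev E ?t2) E = mt (ev d ?t2) E"
      unfolding ev_def using eva[OF EA dA Ed vt(1)[OF e] vtA(1)[OF e]] eva[OF EA dA Ed vt(2)[OF e] vtA(2)[OF e]] by auto
    have m2: "mt (ev w ?t1) w = mt (ev d ?t1) w" "mt (ev w ?t2) w = mt (ev d ?t2) w"
      unfolding ev_def using eva[OF wA dA wd vt(1)[OF e] vtA(1)[OF e]] eva[OF wA dA wd vt(2)[OF e] vtA(2)[OF e]] by auto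
    have "ev w ?t1 = ev w ?t2" using Qw e unfolding Q_def by auto
    hence "mt (ev d ?t1) w = mt (ev d ?t2) w" using m2 by simp
    hence "mt (mt (ev d ?t1) w) E = mt (mt (ev d ?t2) w) E" by simp
    moreover have "mt (ev d ?t1) E = mt (mt (ev d ?t1) w) E"
      using ma[OF evA(3) wA EA] mwE by simp
    moreover have "mt (ev d ?t2) E = mt (mt (ev d ?t2) w) E"
      using ma[OF evA(4) wA EA] mwE by simp
    ultimately have mE: "mt (ev E ?t1) E = mt (ev E ?t2) E" using m1 by simp
    let ?a = "ev z ?t1" and ?b = "ev z ?t2"
    have ab: "?a \<in> A" "?b \<in> A" using evzC[OF e] CA by auto
    have dE: "df (ev E ?t1) E = df ?a E" "df (ev E ?t2) E = df ?b E"
      unfolding ev_def using evb[OF EA vt(1)[OF e] vtA(1)[OF e]] evb[OF EA vt(2)[OF e] vtA(2)[OF e]] by auto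
    have "df ?a E = df ?b E"
      using Dsym[OF ab EA] EF e unfolding F_def by auto
    hence "df (ev E ?t1) E = df (ev E ?t2) E" using dE by simp
    thus "ev E ?t1 = ev E ?t2" using mE D8[OF evA(1) EA] D8[OF evA(2) EA] by metis
  qed
  show ?thesis
  proof (rule bexI[OF _ EC])
    have ubE: "is_upper_bound A jn X E" using ub_iff[OF EA] QE by simp
    moreover have "ershov_le jn E v" if v: "is_upper_bound A jn X v" for v
    proof -
      have vA: "v \<in> A" using v unfolding is_upper_bound_def by auto
      have Qv: "Q v" using ub_iff[OF vA] v by simp
      have vdA: "mt v d \<in> A" using vA dA cm by auto
      have "jn E (mt v d) = jn (mt v d) (mt v d)" using Emin Fle[OF vdA Qh[OF vA Qv]] vdA jidem by auto
      hence "jn E (mt v d) = mt v d" using jidem vdA by simp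
      moreover have "jn (mt v d) v = v" using vA dA ab1 jc cm by metis
      ultimately show ?thesis unfolding ershov_le_def using le_trans EA vdA vA by metis
    qed
    ultimately show "is_supremum A jn X E" unfolding is_supremum_def by auto
  qed
qed

end

theorem mainTheorem7:
  fixes A C :: "'a set" and jn mt df :: "'a \<Rightarrow> 'a \<Rightarrow> 'a" and z :: 'a
  assumes "ershov_algebra A jn mt df z"
    and "ershov_subalgebra C A jn mt df z"
    and "weakly_eq_noetherian A C jn mt df z"
  shows "\<forall>X. X \<subseteq> C \<and> (\<exists>u. is_upper_bound A jn X u) \<longrightarrow>
           (\<exists>s\<in>C. is_supremum A jn X s)"
proof (intro allI impI, elim conjE exE)
  fix X u assume "X \<subseteq> C" "is_upper_bound A jn X u"
  interpret ersh A jn mt df z using assms(1) by unfold_locales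
  show "\<exists>s\<in>C. is_supremum A jn X s" using main assms \<open>X \<subseteq> C\<close> \<open>is_upper_bound A jn X u\<close> by blast
qed

end
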